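(* Fix $a\in(0,1/2)$, $b\in(0,1)$ and a constant $c>0$, and consider the spread process with parameters $(G,r,T,a,b)$. Suppose that $$\max\Big\{\frac{V_G(r,s')-V_G(r,s)}{V_G(r,t)}:\ s<s'\le t,\ s'-s\le t^{0.5+c}\Big\}\longrightarrow0\quad\text{as }t\to\infty.$$ Then for every $\eta>0$ there is $t_0$ such that for all $t\ge t_0$, $\Pr\big[|\lambda_{G,r}(t)-\mathbb{E}[\lambda_{G,r}(t)]|>\eta\big]<\eta$.
   Context: Spread process. Fix $a,b\in[0,1]$. Let $G=(V,E)$ be a connected, locally finite, undirected graph, $r\in V$ a root, and $T$ a BFS spanning tree of $G$ rooted at $r$ ($d_T(r,v)=d_G(r,v)$), oriented away from $r$, with parent $p(v)$ for $v\ne r$. The spread process with parameters $(G,r,T,a,b)$ is the random sequence $f_t:V\to\{+1,-1,\bot\}$: $f_t(r)=+1$ for all $t$; $f_0(v)=\bot$ for $v\ne r$; for $t\ge1$ and each $v\ne r$ independently: if $f_{t-1}(v)=\bot\ne f_{t-1}(p(v))$ then $f_t(v)=f_{t-1}(p(v))$ w.p. $1-a$ and $-f_{t-1}(p(v))$ w.p. $a$; if $f_{t-1}(v)\ne\bot$ then $f_t(v)=f_{t-1}(p(v))$ w.p. $b$ and $f_{t-1}(v)$ w.p. $1-b$; if $f_{t-1}(v)=f_{t-1}(p(v))=\bot$ then $f_t(v)=\bot$. Volume: $V_G(r,\rho)=|\{u:d_G(r,u)\le\rho\}|$. Opinion bias: $\lambda_{G,r}(t)=\dfrac{|\{v:f_t(v)=+1\}|-|\{v:f_t(v)=-1\}|}{|\{v:f_t(v)\ne\bot\}|}$.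 *)

theory Defs
  imports "HOL-Probability.Probability"
begin

datatype opinion = Pos | Neg | Bot

fun opp :: "opinion \<Rightarrow> opinion" where
  "opp Pos = Neg" | "opp Neg = Pos" | "opp Bot = Bot"

text \<open>Graph given by an edge relation E on the vertex type 'v (V = UNIV).\<close>

definition edge_rel :: "('v \<Rightarrow> 'v \<Rightarrow> bool) \<Rightarrow> ('v \<times> 'v) set" where
  "edge_rel E = {(x, y). E x y}"

definition gdist :: "('v \<Rightarrow> 'v \<Rightarrow> bool) \<Rightarrow> 'v \<Rightarrow> 'v \<Rightarrow> nat" where
  "gdist E u v = (LEAST n. (u, v) \<in> edge_rel E ^^ n)"

definition connected_graph :: "('v \<Rightarrow> 'v \<Rightarrow> bool) \<Rightarrow> bool" where
  "connected_graph E \<longleftrightarrow> (\<forall>u v. \<exists>n. (u, v) \<in> edge_rel E ^^ n)"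

definition locally_finite :: "('v \<Rightarrow> 'v \<Rightarrow> bool) \<Rightarrow> bool" where
  "locally_finite E \<longleftrightarrow> (\<forall>v. finite {u. E v u})"

definition undirected :: "('v \<Rightarrow> 'v \<Rightarrow> bool) \<Rightarrow> bool" where
  "undirected E \<longleftrightarrow> (\<forall>u v. E u v \<longrightarrow> E v u)"

text \<open>BFS spanning tree rooted at r, given by its parent map p.\<close>
definition bfs_parent :: "('v \<Rightarrow> 'v \<Rightarrow> bool) \<Rightarrow> 'v \<Rightarrow> ('v \<Rightarrow> 'v) \<Rightarrow> bool" where
  "bfs_parent E r p \<longleftrightarrow>
     (\<forall>v. v \<noteq> r \<longrightarrow> E (p v) v \<and> gdist E r v = gdist E r (p v) + 1)"

definition volume :: "('v \<Rightarrow> 'v \<Rightarrow> bool) \<Rightarrow> 'v \<Rightarrow> nat \<Rightarrow> nat" where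
  "volume E r \<rho> = card {u. gdist E r u \<le> \<rho>}"

definition local_step :: "real \<Rightarrow> real \<Rightarrow> ('v \<Rightarrow> 'v) \<Rightarrow> ('v \<Rightarrow> opinion) \<Rightarrow> 'v \<Rightarrow> opinion pmf" where
  "local_step a b p f v =
     (if f v = Bot then
        (if f (p v) = Bot then return_pmf Bot
         else map_pmf (\<lambda>x. if x then opp (f (p v)) else f (p v)) (bernoulli_pmf a))
      else map_pmf (\<lambda>x. if x then f (p v) else f v) (bernoulli_pmf b))"

definition spread_step :: "real \<Rightarrow> real \<Rightarrow> 'v \<Rightarrow> ('v \<Rightarrow> 'v) \<Rightarrow> ('v \<Rightarrow> opinion) \<Rightarrow> ('v \<Rightarrow> opinion) pmf" where
  "spread_step a b r p f =
     map_pmf (\<lambda>g. g(r := Pos))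
       (Pi_pmf {v. v \<noteq> r \<and> (f v \<noteq> Bot \<or> f (p v) \<noteq> Bot)} Bot (local_step a b p f))"

fun spread_dist :: "real \<Rightarrow> real \<Rightarrow> 'v \<Rightarrow> ('v \<Rightarrow> 'v) \<Rightarrow> nat \<Rightarrow> ('v \<Rightarrow> opinion) pmf" where
  "spread_dist a b r p 0 = return_pmf (\<lambda>v. if v = r then Pos else Bot)"
| "spread_dist a b r p (Suc t) = bind_pmf (spread_dist a b r p t) (spread_step a b r p)"

definition opinion_bias :: "('v \<Rightarrow> opinion) \<Rightarrow> real" where
  "opinion_bias f =
     (real (card {v. f v = Pos}) - real (card {v. f v = Neg})) / real (card {v. f v \<noteq> Bot})"

end

theory Submission
  imports Defs
begin


fun val :: "opinion \<Rightarrow> real" where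
  "val Pos = 1" | "val Neg = -1" | "val Bot = 0"

lemma val_opp: "val (opp x) = - val x"
  by (cases x) auto

lemma sum_if_card: "finite A \<Longrightarrow> (\<Sum>x\<in>A. if P x then 1 else (0::real)) = real (card (A \<inter> {x. P x}))"
  by (simp add: sum.If_cases)

lemma sum_if_card4: "finite A \<Longrightarrow> (\<Sum>x\<in>A. if P x then 4 else (0::real)) = 4 * real (card (A \<inter> {x. P x}))"
  by (simp add: sum.If_cases)

lemma val_split: "val z = (if z = Pos then 1 else 0) - (if z = Neg then 1 else 0)"
  by (cases z) auto

lemma val_bound: "\<bar>val x\<bar> \<le> 1"
  by (cases x) auto

lemma exp_sum:
  assumes "finite (set_pmf M)"
  shows "measure_pmf.expectation M (h :: _ \<Rightarrow> real) = (\<Sum>x\<in>set_pmf M. pmf M x * h x)"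
  using assms by (subst integral_measure_pmf[of "set_pmf M"]) auto

lemma exp_cong:
  assumes "finite (set_pmf M)" "\<And>x. x \<in> set_pmf M \<Longrightarrow> f x = g x"
  shows "measure_pmf.expectation M (f :: _ \<Rightarrow> real) = measure_pmf.expectation M g"
  using assms by (simp add: exp_sum)

lemma exp_bind:
  assumes "finite (set_pmf M)" "\<And>x. x \<in> set_pmf M \<Longrightarrow> finite (set_pmf (N x))"
  shows "measure_pmf.expectation (bind_pmf M N) (h :: _ \<Rightarrow> real) =
         measure_pmf.expectation M (\<lambda>x. measure_pmf.expectation (N x) h)"
  using assms by (subst pmf_expectation_bind[of "set_pmf M"]) (auto simp: exp_sum)

lemma exp_pair:
  assumes "finite (set_pmf A)" "finite (set_pmf B)"
  shows "measure_pmf.expectation (pair_pmf A B) (\<lambda>(x,y). (\<phi> x :: real) * \<psi> y) =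
         measure_pmf.expectation A \<phi> * measure_pmf.expectation B \<psi>"
proof -
  have "measure_pmf.expectation (pair_pmf A B) (\<lambda>(x,y). \<phi> x * \<psi> y) =
     measure_pmf.expectation A (\<lambda>x. measure_pmf.expectation (bind_pmf B (\<lambda>y. return_pmf (x, y))) (\<lambda>(x,y). \<phi> x * \<psi> y))"
    unfolding pair_pmf_def using assms by (subst exp_bind) auto
  also have "\<dots> = measure_pmf.expectation A (\<lambda>x. \<phi> x * measure_pmf.expectation B \<psi>)"
    using assms by (subst exp_bind) auto
  also have "\<dots> = measure_pmf.expectation A \<phi> * measure_pmf.expectation B \<psi>"
    by simp
  finally show ?thesis .
qed

lemma Pi_pair:
  assumes "finite A" "x \<noteq> y"
  shows "map_pmf (\<lambda>g. (g x, g y)) (Pi_pmf A dflt q) =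
         pair_pmf (map_pmf (\<lambda>g. g x) (Pi_pmf A dflt q)) (map_pmf (\<lambda>g. g y) (Pi_pmf A dflt q))"
proof (cases "x \<in> A")
  case True
  define A' where "A' = A - {x}"
  have A: "A = insert x A'" "x \<notin> A'" "finite A'" using True assms by (auto simp: A'_def)
  have "map_pmf (\<lambda>g. (g x, g y)) (Pi_pmf A dflt q) =
        map_pmf (\<lambda>(z,f). (z, f y)) (pair_pmf (q x) (Pi_pmf A' dflt q))"
    unfolding A(1) using A assms by (subst Pi_pmf_insert) (auto simp: pmf.map_comp o_def case_prod_unfold)
  also have "\<dots> = pair_pmf (q x) (map_pmf (\<lambda>f. f y) (Pi_pmf A' dflt q))"
    using map_pair[of id "\<lambda>f. f y" "q x" "Pi_pmf A' dflt q"] by (simp add: case_prod_unfold)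
  also have "\<dots> = pair_pmf (map_pmf (\<lambda>g. g x) (Pi_pmf A dflt q)) (map_pmf (\<lambda>g. g y) (Pi_pmf A dflt q))"
    using A assms True by (simp add: Pi_pmf_component)
  finally show ?thesis .
next
  case False
  have "map_pmf (\<lambda>g. (g x, g y)) (Pi_pmf A dflt q) = map_pmf (\<lambda>g. (dflt, g y)) (Pi_pmf A dflt q)"
    using False set_Pi_pmf_subset[OF assms(1), of dflt q] by (intro pmf.map_cong refl) auto
  also have "\<dots> = pair_pmf (return_pmf dflt) (map_pmf (\<lambda>g. g y) (Pi_pmf A dflt q))"
    by (simp add: pair_return_pmf1 pmf.map_comp o_def)
  also have "\<dots> = pair_pmf (map_pmf (\<lambda>g. g x) (Pi_pmf A dflt q)) (map_pmf (\<lambda>g. g y) (Pi_pmf A dflt q))"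
    using False assms by (simp add: Pi_pmf_component)
  finally show ?thesis .
qed


lemma exp_abs_le:
  assumes "finite (set_pmf M)" "\<And>x. x \<in> set_pmf M \<Longrightarrow> \<bar>h x\<bar> \<le> (B::real)"
  shows "\<bar>measure_pmf.expectation M h\<bar> \<le> B"
proof -
  have "\<bar>measure_pmf.expectation M h\<bar> = \<bar>\<Sum>x\<in>set_pmf M. pmf M x * h x\<bar>"
    using assms by (simp add: exp_sum)
  also have "\<dots> \<le> (\<Sum>x\<in>set_pmf M. \<bar>pmf M x * h x\<bar>)" by (rule sum_abs)
  also have "\<dots> \<le> (\<Sum>x\<in>set_pmf M. pmf M x * B)"
    using assms(2) by (intro sum_mono) (simp add: abs_mult mult_left_mono)
  also have "\<dots> = B" using sum_pmf_eq_1[OF assms(1), of M] by (simp add: sum_distrib_right[symmetric])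
  finally show ?thesis .
qed


lemma abs4:
  fixes a1 a2 a3 a4 c1 c2 c3 c4 :: real
  assumes "0 \<le> a1" "0 \<le> a2" "0 \<le> a3" "0 \<le> a4"
  shows "\<bar>a1*c1 + a2*c2 + a3*c3 + a4*c4\<bar> \<le> a1*\<bar>c1\<bar> + a2*\<bar>c2\<bar> + a3*\<bar>c3\<bar> + a4*\<bar>c4\<bar>"
proof -
  have "\<bar>a1*c1 + a2*c2 + a3*c3 + a4*c4\<bar> \<le> \<bar>a1*c1\<bar> + \<bar>a2*c2\<bar> + \<bar>a3*c3\<bar> + \<bar>a4*c4\<bar>"
    by linarith
  then show ?thesis using assms by (simp add: abs_mult)
qed

lemma abs2:
  fixes a1 a2 c1 c2 :: real
  assumes "0 \<le> a1" "0 \<le> a2"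
  shows "\<bar>a1*c1 + a2*c2\<bar> \<le> a1*\<bar>c1\<bar> + a2*\<bar>c2\<bar>"
proof -
  have "\<bar>a1*c1 + a2*c2\<bar> \<le> \<bar>a1*c1\<bar> + \<bar>a2*c2\<bar>" by linarith
  then show ?thesis using assms by (simp add: abs_mult)
qed

locale spr =
  fixes E :: "'v \<Rightarrow> 'v \<Rightarrow> bool" and r :: 'v and p :: "'v \<Rightarrow> 'v" and a b :: real
  assumes lf: "locally_finite E" and bfs: "bfs_parent E r p"
    and a0: "0 < a" and a1: "a < 1/2" and b0: "0 < b" and b1: "b < 1"
begin

abbreviation d where "d \<equiv> gdist E r"

lemma d_r[simp]: "d r = 0"
  unfolding gdist_def by (rule Least_eq_0) (simp add: edge_rel_def)

lemma d_p: "v \<noteq> r \<Longrightarrow> d v = d (p v) + 1"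
  using bfs unfolding bfs_parent_def by blast

lemma E_p: "v \<noteq> r \<Longrightarrow> E (p v) v"
  using bfs unfolding bfs_parent_def by blast

lemma d_pos: "v \<noteq> r \<Longrightarrow> 0 < d v"
  using d_p by simp

lemma d_zero_iff: "d v = 0 \<longleftrightarrow> v = r"
  using d_pos by fastforce

lemma finite_ball: "finite {v. d v \<le> n}"
proof (induction n)
  case 0
  have "{v. d v \<le> 0} = {r}" using d_zero_iff by auto
  then show ?case by simp
next
  case (Suc n)
  have "{v. d v \<le> Suc n} \<subseteq> {v. d v \<le> n} \<union> (\<Union>w\<in>{v. d v \<le> n}. {u. E w u})"
  proof
    fix v assume "v \<in> {v. d v \<le> Suc n}"
    then have h: "d v \<le> Suc n" by simp
    show "v \<in> {v. d v \<le> n} \<union> (\<Union>w\<in>{v. d v \<le> n}. {u. E w u})"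
    proof (cases "d v \<le> n")
      case False
      then have "v \<noteq> r" by auto
      then show ?thesis using d_p[of v] E_p[of v] h False by auto
    qed simp
  qed
  moreover have "finite ({v. d v \<le> n} \<union> (\<Union>w\<in>{v. d v \<le> n}. {u. E w u}))"
    using Suc lf unfolding locally_finite_def by auto
  ultimately show ?case by (rule finite_subset)
qed

definition Inv :: "nat \<Rightarrow> ('v \<Rightarrow> opinion) \<Rightarrow> bool" where
  "Inv s f \<longleftrightarrow> f r = Pos \<and> (\<forall>v. f v = Bot \<longleftrightarrow> s < d v)"

abbreviation SS where "SS f \<equiv> {v. v \<noteq> r \<and> (f v \<noteq> Bot \<or> f (p v) \<noteq> Bot)}"

lemma S_eq: "Inv s f \<Longrightarrow> SS f = {v. v \<noteq> r \<and> d v \<le> Suc s}"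
  unfolding Inv_def using d_p by fastforce

lemma S_fin: "Inv s f \<Longrightarrow> finite (SS f)"
  by (subst S_eq, assumption) (rule finite_subset[OF _ finite_ball[of "Suc s"]], auto)

lemma opp_Bot: "opp x = Bot \<longleftrightarrow> x = Bot"
  by (cases x) auto

lemma set_local_step:
  assumes "Inv s f" "v \<noteq> r" "d v \<le> Suc s"
  shows "set_pmf (local_step a b p f v) \<subseteq> {x. x \<noteq> Bot}"
proof -
  have pv: "f (p v) \<noteq> Bot" using assms d_p[of v] unfolding Inv_def by auto
  show ?thesis
    unfolding local_step_def using pv by (auto simp: opp_Bot)
qed

lemma finite_local_step: "finite (set_pmf (local_step a b p f v))"
  unfolding local_step_def by auto

lemma step_set:
  assumes "Inv s f" "g \<in> set_pmf (spread_step a b r p f)"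
  shows "Inv (Suc s) g"
proof -
  obtain h where h: "h \<in> set_pmf (Pi_pmf (SS f) Bot (local_step a b p f))" and g: "g = h(r := Pos)"
    using assms(2) unfolding spread_step_def by auto
  have hh: "h \<in> PiE_dflt (SS f) Bot (set_pmf \<circ> local_step a b p f)"
    using h[unfolded set_Pi_pmf[OF S_fin[OF assms(1)]]] .
  show ?thesis unfolding Inv_def
  proof (intro conjI allI)
    show "g r = Pos" using g by simp
    fix v
    show "g v = Bot \<longleftrightarrow> Suc s < d v"
    proof (cases "v = r")
      case True then show ?thesis using g by simp
    next
      case False
      show ?thesis
      proof (cases "d v \<le> Suc s")
        case True
        then have "v \<in> SS f" using S_eq[OF assms(1)] False by auto
        then have "h v \<in> set_pmf (local_step a b p f v)" using hh unfolding PiE_dflt_def by auto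
        then have "h v \<noteq> Bot" using set_local_step[OF assms(1) False True] by auto
        then show ?thesis using g False True by auto
      next
        case F2: False
        then have "v \<notin> SS f" using S_eq[OF assms(1)] by auto
        then have "h v = Bot" using hh unfolding PiE_dflt_def by auto
        then show ?thesis using g False F2 by auto
      qed
    qed
  qed
qed

lemma step_finite:
  assumes "Inv s f" shows "finite (set_pmf (spread_step a b r p f))"
  unfolding spread_step_def using S_fin[OF assms] finite_local_step
  by (auto simp: set_Pi_pmf intro!: finite_PiE_dflt)

abbreviation D where "D s \<equiv> spread_dist a b r p s"

lemma supp: "f \<in> set_pmf (D s) \<Longrightarrow> Inv s f"
proof (induction s arbitrary: f)
  case 0
  then show ?case unfolding Inv_def using d_zero_iff by auto
next
  case (Suc s)
  then show ?case using step_set by auto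
qed

lemma supp_Bot: "f \<in> set_pmf (D s) \<Longrightarrow> s < d v \<Longrightarrow> f v = Bot"
  using supp unfolding Inv_def by blast

lemma supp_nBot: "f \<in> set_pmf (D s) \<Longrightarrow> d v \<le> s \<Longrightarrow> f v \<noteq> Bot"
  using supp unfolding Inv_def by (meson not_le)

lemma D_finite: "finite (set_pmf (D s))"
proof (induction s)
  case 0
  then show ?case by simp
next
  case (Suc s)
  then show ?case using step_finite supp by auto
qed

lemma comp_step:
  assumes "Inv s f" "x \<noteq> r"
  shows "map_pmf (\<lambda>g. g x) (spread_step a b r p f) =
     (if x \<in> SS f then local_step a b p f x else return_pmf Bot)"
proof -
  have "map_pmf (\<lambda>g. g x) (spread_step a b r p f) = map_pmf (\<lambda>g. g x) (Pi_pmf (SS f) Bot (local_step a b p f))"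
    unfolding spread_step_def using assms by (simp add: pmf.map_comp o_def)
  also have "\<dots> = (if x \<in> SS f then local_step a b p f x else return_pmf Bot)"
    by (rule Pi_pmf_component[OF S_fin[OF assms(1)]])
  finally show ?thesis .
qed

lemma step_map_eq:
  assumes "x \<noteq> r" "y \<noteq> r"
  shows "map_pmf (\<lambda>g. (g x, g y)) (spread_step a b r p f) =
         map_pmf (\<lambda>g. (g x, g y)) (Pi_pmf (SS f) Bot (local_step a b p f))"
    "map_pmf (\<lambda>g. g x) (spread_step a b r p f) =
         map_pmf (\<lambda>g. g x) (Pi_pmf (SS f) Bot (local_step a b p f))"
  unfolding spread_step_def using assms by (simp_all add: pmf.map_comp o_def)

lemma exp_prod_step:
  assumes "Inv s f" "x \<noteq> r" "y \<noteq> r" "x \<noteq> y"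
  shows "measure_pmf.expectation (spread_step a b r p f) (\<lambda>g. \<phi> (g x) * (\<psi> (g y) :: real)) =
         measure_pmf.expectation (spread_step a b r p f) (\<lambda>g. \<phi> (g x)) *
         measure_pmf.expectation (spread_step a b r p f) (\<lambda>g. \<psi> (g y))"
proof -
  let ?M = "spread_step a b r p f"
  let ?P = "Pi_pmf (SS f) Bot (local_step a b p f)"
  have fin: "finite (set_pmf ?M)" using step_finite[OF assms(1)] .
  have fx: "finite (set_pmf (map_pmf (\<lambda>g. g x) ?M))" "finite (set_pmf (map_pmf (\<lambda>g. g y) ?M))"
    using fin by auto
  have "measure_pmf.expectation ?M (\<lambda>g. \<phi> (g x) * \<psi> (g y)) =
        measure_pmf.expectation (map_pmf (\<lambda>g. (g x, g y)) ?M) (\<lambda>(u,w). \<phi> u * \<psi> w)"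
    by simp
  also have "map_pmf (\<lambda>g. (g x, g y)) ?M = pair_pmf (map_pmf (\<lambda>g. g x) ?M) (map_pmf (\<lambda>g. g y) ?M)"
    using step_map_eq[OF assms(2,3)] step_map_eq[OF assms(3,2)] Pi_pair[OF S_fin[OF assms(1)] assms(4)]
    by simp
  also have "measure_pmf.expectation \<dots> (\<lambda>(u,w). \<phi> u * \<psi> w) =
     measure_pmf.expectation (map_pmf (\<lambda>g. g x) ?M) \<phi> * measure_pmf.expectation (map_pmf (\<lambda>g. g y) ?M) \<psi>"
    by (rule exp_pair[OF fx])
  finally show ?thesis by simp
qed

lemma exp_shift:
  assumes "finite (set_pmf M)"
  shows "measure_pmf.expectation M (\<lambda>z. h z - c) = measure_pmf.expectation M h - (c::real)"
  using assms by (simp add: integrable_measure_pmf_finite)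

lemma exp_val_step_copy:
  assumes "Inv s f" "x \<noteq> r" "d x \<le> s"
  shows "measure_pmf.expectation (spread_step a b r p f) (\<lambda>g. val (g x)) = (1-b) * val (f x) + b * val (f (p x))"
proof -
  have "x \<in> SS f" using S_eq[OF assms(1)] assms by auto
  moreover have "f x \<noteq> Bot" using assms unfolding Inv_def by auto
  moreover have "measure_pmf.expectation (spread_step a b r p f) (\<lambda>g. val (g x)) =
     measure_pmf.expectation (map_pmf (\<lambda>g. g x) (spread_step a b r p f)) val" by simp
  ultimately show ?thesis
    using comp_step[OF assms(1,2)] b0 b1
    by (simp add: local_step_def)
qed

lemma exp_val_step_act:
  assumes "Inv s f" "x \<noteq> r" "d x = Suc s"
  shows "measure_pmf.expectation (spread_step a b r p f) (\<lambda>g. val (g x)) = (1-2*a) * val (f (p x))"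
proof -
  have "x \<in> SS f" using S_eq[OF assms(1)] assms by auto
  moreover have "f x = Bot" using assms unfolding Inv_def by auto
  moreover have "f (p x) \<noteq> Bot" using assms d_p[of x] unfolding Inv_def by auto
  moreover have "measure_pmf.expectation (spread_step a b r p f) (\<lambda>g. val (g x)) =
     measure_pmf.expectation (map_pmf (\<lambda>g. g x) (spread_step a b r p f)) val" by simp
  ultimately show ?thesis
    using comp_step[OF assms(1,2)] a0 a1
    by (simp add: local_step_def val_opp) (simp add: algebra_simps)
qed

lemma exp_val_step_far:
  assumes "Inv s f" "x \<noteq> r" "Suc s < d x"
  shows "measure_pmf.expectation (spread_step a b r p f) (\<lambda>g. val (g x)) = 0"
proof -
  have "x \<notin> SS f" using S_eq[OF assms(1)] assms by auto
  moreover have "measure_pmf.expectation (spread_step a b r p f) (\<lambda>g. val (g x)) =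
     measure_pmf.expectation (map_pmf (\<lambda>g. g x) (spread_step a b r p f)) val" by simp
  moreover have "map_pmf (\<lambda>g. g x) (spread_step a b r p f) = return_pmf Bot"
    using comp_step[OF assms(1,2)] \<open>x \<notin> SS f\<close> by (simp only: if_False)
  ultimately show ?thesis by simp
qed

definition m :: "nat \<Rightarrow> 'v \<Rightarrow> real" where
  "m s v = measure_pmf.expectation (D s) (\<lambda>f. val (f v))"

definition C :: "nat \<Rightarrow> 'v \<Rightarrow> 'v \<Rightarrow> real" where
  "C s u v = measure_pmf.expectation (D s) (\<lambda>f. (val (f u) - m s u) * (val (f v) - m s v))"

lemma m_bound: "\<bar>m s v\<bar> \<le> 1"
  unfolding m_def by (rule exp_abs_le[OF D_finite]) (rule val_bound)

lemma C_bound: "\<bar>C s u v\<bar> \<le> 4"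
  unfolding C_def
proof (rule exp_abs_le[OF D_finite])
  fix f
  have "\<bar>val (f u) - m s u\<bar> \<le> 2" "\<bar>val (f v) - m s v\<bar> \<le> 2"
    using val_bound[of "f u"] val_bound[of "f v"] m_bound[of s u] m_bound[of s v] by linarith+
  then show "\<bar>(val (f u) - m s u) * (val (f v) - m s v)\<bar> \<le> 4"
    using mult_mono[of "\<bar>val (f u) - m s u\<bar>" 2 "\<bar>val (f v) - m s v\<bar>" 2]
    by (simp add: abs_mult)
qed

lemma C_sym: "C s u v = C s v u"
  unfolding C_def by (simp add: mult.commute)

lemma m_root: "m s r = 1"
proof -
  have "m s r = measure_pmf.expectation (D s) (\<lambda>f. 1)"
    unfolding m_def by (rule exp_cong[OF D_finite]) (auto dest!: supp simp: Inv_def)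
  then show ?thesis by simp
qed

lemma C_root: "C s r v = 0"
proof -
  have "C s r v = measure_pmf.expectation (D s) (\<lambda>f. 0)"
    unfolding C_def by (rule exp_cong[OF D_finite]) (auto dest!: supp simp: Inv_def m_root)
  then show ?thesis by simp
qed

lemma m_far: "s < d v \<Longrightarrow> m s v = 0"
proof -
  assume "s < d v"
  then have "m s v = measure_pmf.expectation (D s) (\<lambda>f. 0)"
    unfolding m_def by (intro exp_cong[OF D_finite]) (simp add: supp_Bot)
  then show ?thesis by simp
qed

lemma C_far: "s < d v \<Longrightarrow> C s u v = 0"
proof -
  assume h: "s < d v"
  then have "C s u v = measure_pmf.expectation (D s) (\<lambda>f. 0)"
    unfolding C_def by (intro exp_cong[OF D_finite]) (simp add: supp_Bot m_far)
  then show ?thesis by simp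
qed

lemma exp_D_Suc:
  "measure_pmf.expectation (D (Suc s)) h =
   measure_pmf.expectation (D s) (\<lambda>f. measure_pmf.expectation (spread_step a b r p f) (h :: _ \<Rightarrow> real))"
  by (simp only: spread_dist.simps) (rule exp_bind[OF D_finite step_finite[OF supp]])

lemma exp_lin2:
  "measure_pmf.expectation (D s) (\<lambda>f. \<alpha> * val (f u) + \<beta> * val (f w)) = \<alpha> * m s u + \<beta> * m s w"
  unfolding m_def using D_finite[of s]
  by (simp add: exp_sum sum.distrib sum_distrib_left algebra_simps)

lemma m_Suc_copy: "x \<noteq> r \<Longrightarrow> d x \<le> s \<Longrightarrow> m (Suc s) x = (1-b) * m s x + b * m s (p x)"
proof -
  assume h: "x \<noteq> r" "d x \<le> s"
  have "m (Suc s) x = measure_pmf.expectation (D s) (\<lambda>f. (1-b) * val (f x) + b * val (f (p x)))"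
    unfolding m_def exp_D_Suc
    by (rule exp_cong[OF D_finite]) (rule exp_val_step_copy[OF supp h])
  then show ?thesis by (simp add: exp_lin2)
qed

lemma m_Suc_act: "x \<noteq> r \<Longrightarrow> d x = Suc s \<Longrightarrow> m (Suc s) x = (1-2*a) * m s (p x)"
proof -
  assume h: "x \<noteq> r" "d x = Suc s"
  have "m (Suc s) x = measure_pmf.expectation (D s) (\<lambda>f. 0 * val (f x) + (1-2*a) * val (f (p x)))"
    unfolding m_def exp_D_Suc
    by (rule exp_cong[OF D_finite]) (simp add: exp_val_step_act[OF supp h])
  then show ?thesis by (simp only: exp_lin2)
qed


lemma exp_quad:
  "measure_pmf.expectation (D s) (\<lambda>f. (\<alpha> * (val (f u) - m s u) + \<beta> * (val (f u') - m s u')) *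
       (\<gamma> * (val (f v) - m s v) + \<delta> * (val (f v') - m s v'))) =
   \<alpha>*\<gamma>*C s u v + \<alpha>*\<delta>*C s u v' + \<beta>*\<gamma>*C s u' v + \<beta>*\<delta>*C s u' v'"
proof -
  let ?Z = "\<lambda>f w. val (f w) - m s w"
  have e: "(\<lambda>f. (\<alpha> * ?Z f u + \<beta> * ?Z f u') * (\<gamma> * ?Z f v + \<delta> * ?Z f v')) =
     (\<lambda>f. \<alpha>*\<gamma>*(?Z f u * ?Z f v) + \<alpha>*\<delta>*(?Z f u * ?Z f v') + \<beta>*\<gamma>*(?Z f u' * ?Z f v) + \<beta>*\<delta>*(?Z f u' * ?Z f v'))"
    by (rule ext) (simp only: distrib_left distrib_right mult_ac)
  show ?thesis
    unfolding e C_def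
    by (simp add: integrable_measure_pmf_finite[OF D_finite] del: integral_mult_right_zero)
qed

lemma C_Suc_gen:
  assumes "x \<noteq> y" "x \<noteq> r" "y \<noteq> r"
  shows "C (Suc s) x y = measure_pmf.expectation (D s)
     (\<lambda>f. (measure_pmf.expectation (spread_step a b r p f) (\<lambda>g. val (g x)) - m (Suc s) x) *
          (measure_pmf.expectation (spread_step a b r p f) (\<lambda>g. val (g y)) - m (Suc s) y))"
  unfolding C_def exp_D_Suc
proof (rule exp_cong[OF D_finite])
  fix f assume f: "f \<in> set_pmf (D s)"
  have "measure_pmf.expectation (spread_step a b r p f) (\<lambda>g. (val (g x) - m (Suc s) x) * (val (g y) - m (Suc s) y)) =
        measure_pmf.expectation (spread_step a b r p f) (\<lambda>g. val (g x) - m (Suc s) x) *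
        measure_pmf.expectation (spread_step a b r p f) (\<lambda>g. val (g y) - m (Suc s) y)"
    using exp_prod_step[OF supp[OF f] assms(2,3,1), of "\<lambda>z. val z - m (Suc s) x" "\<lambda>z. val z - m (Suc s) y"] .
  also have "\<dots> = (measure_pmf.expectation (spread_step a b r p f) (\<lambda>g. val (g x)) - m (Suc s) x) *
          (measure_pmf.expectation (spread_step a b r p f) (\<lambda>g. val (g y)) - m (Suc s) y)"
    using step_finite[OF supp[OF f]] by (simp add: exp_shift)
  finally show "measure_pmf.expectation (spread_step a b r p f) (\<lambda>g. (val (g x) - m (Suc s) x) * (val (g y) - m (Suc s) y)) =
     (measure_pmf.expectation (spread_step a b r p f) (\<lambda>g. val (g x)) - m (Suc s) x) *
          (measure_pmf.expectation (spread_step a b r p f) (\<lambda>g. val (g y)) - m (Suc s) y)" .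
qed

lemma ex_copy:
  assumes "f \<in> set_pmf (D s)" "x \<noteq> r" "d x \<le> s"
  shows "measure_pmf.expectation (spread_step a b r p f) (\<lambda>g. val (g x)) - m (Suc s) x =
     (1-b) * (val (f x) - m s x) + b * (val (f (p x)) - m s (p x))"
  using exp_val_step_copy[OF supp[OF assms(1)] assms(2,3)] m_Suc_copy[OF assms(2,3)]
  by (simp add: algebra_simps)

lemma ex_act:
  assumes "f \<in> set_pmf (D s)" "x \<noteq> r" "d x = Suc s"
  shows "measure_pmf.expectation (spread_step a b r p f) (\<lambda>g. val (g x)) - m (Suc s) x =
     0 * (val (f x) - m s x) + (1-2*a) * (val (f (p x)) - m s (p x))"
  using exp_val_step_act[OF supp[OF assms(1)] assms(2,3)] m_Suc_act[OF assms(2,3)]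
  by (simp add: algebra_simps)

lemma C_Suc_copy:
  assumes "x \<noteq> y" "x \<noteq> r" "y \<noteq> r" "d x \<le> s" "d y \<le> s"
  shows "C (Suc s) x y = (1-b)*(1-b)*C s x y + (1-b)*b*C s x (p y) + b*(1-b)*C s (p x) y + b*b*C s (p x) (p y)"
proof -
  have "C (Suc s) x y = measure_pmf.expectation (D s)
     (\<lambda>f. ((1-b) * (val (f x) - m s x) + b * (val (f (p x)) - m s (p x))) *
          ((1-b) * (val (f y) - m s y) + b * (val (f (p y)) - m s (p y))))"
    unfolding C_Suc_gen[OF assms(1-3)]
    by (rule exp_cong[OF D_finite]) (simp add: ex_copy assms)
  then show ?thesis by (simp only: exp_quad)
qed

lemma C_Suc_act:
  assumes "x \<noteq> y" "x \<noteq> r" "y \<noteq> r" "d x \<le> s" "d y = Suc s"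
  shows "C (Suc s) x y = (1-b)*(1-2*a)*C s x (p y) + b*(1-2*a)*C s (p x) (p y)"
proof -
  have "C (Suc s) x y = measure_pmf.expectation (D s)
     (\<lambda>f. ((1-b) * (val (f x) - m s x) + b * (val (f (p x)) - m s (p x))) *
          (0 * (val (f y) - m s y) + (1-2*a) * (val (f (p y)) - m s (p y))))"
    unfolding C_Suc_gen[OF assms(1-3)]
    by (rule exp_cong[OF D_finite]) (simp add: ex_copy ex_act assms)
  then show ?thesis by (simp only: exp_quad)
qed

lemma C_zero: "C 0 x y = 0"
  unfolding C_def m_def by simp

lemma C_decay:
  assumes q0: "0 < q" and q1: "q \<le> 1" and rho1: "1 \<le> \<rho>"
    and hc: "((1-b)*(1-b) + b*b) * q + b*(1-b)*(q*q + 1) \<le> \<rho> * q"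
    and ha: "(1-2*a)*((1-b) + b*q) \<le> \<rho> * q"
  shows "\<bar>C s x y\<bar> \<le> 4 * q^(d y - d x) * \<rho>^s"
proof (induction s arbitrary: x y)
  case 0
  have "0 \<le> 4 * q^(d y - d x)" using q0 by simp
  then show ?case by (simp add: C_zero)
next
  case (Suc s)
  have rpos: "0 < \<rho>" using rho1 by simp
  show ?case
  proof (cases "d y \<le> d x \<or> x = r \<or> Suc s < d y")
    case True
    then show ?thesis
    proof (elim disjE)
      assume "d y \<le> d x"
      then have "d y - d x = 0" by simp
      moreover have "1 \<le> \<rho>^Suc s" using rho1 using one_le_power[OF rho1, of "Suc s"] by simp
      ultimately show ?thesis using C_bound[of "Suc s" x y] by simp
    next
      assume "x = r" then show ?thesis using q0 rpos by (simp add: C_root)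
    next
      assume "Suc s < d y" then show ?thesis using q0 rpos by (simp add: C_far)
    qed
  next
    case False
    then have hx: "x \<noteq> r" and lt: "d x < d y" and hy': "d y \<le> Suc s" by auto
    have hy: "y \<noteq> r" using lt by auto
    have xy: "x \<noteq> y" using lt by auto
    have dpx: "d (p x) = d x - 1" "d x \<ge> 1" using d_p[OF hx] by auto
    have dpy: "d (p y) = d y - 1" using d_p[OF hy] by auto
    obtain k where k: "d y - d x = Suc k" using lt by (metis Suc_diff_Suc)
    have e2: "d (p y) - d x = k" using dpy k by simp
    have e3: "d y - d (p x) = Suc (Suc k)" using dpx k by simp
    have e4: "d (p y) - d (p x) = Suc k" using dpx dpy k lt by simp
    define A where "A = 4 * \<rho>^s * q^k"
    have A0: "0 \<le> A" unfolding A_def using q0 rpos by simp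
    have i1: "\<bar>C s x y\<bar> \<le> A * q" using Suc.IH[of x y] k unfolding A_def by (simp add: algebra_simps)
    have i2: "\<bar>C s x (p y)\<bar> \<le> A" using Suc.IH[of x "p y"] e2 unfolding A_def
      by (simp add: algebra_simps)
    have i3: "\<bar>C s (p x) y\<bar> \<le> A * q * q" using Suc.IH[of "p x" y] e3 unfolding A_def
      by (simp add: algebra_simps)
    have i4: "\<bar>C s (p x) (p y)\<bar> \<le> A * q" using Suc.IH[of "p x" "p y"] e4 unfolding A_def
      by (simp add: algebra_simps)
    have goal: "4 * q ^ (d y - d x) * \<rho> ^ Suc s = A * (\<rho> * q)" unfolding A_def k by (simp add: algebra_simps)
    have b0': "0 \<le> b" "0 \<le> 1 - b" using b0 b1 by auto
    have t0: "0 \<le> 1 - 2*a" using a1 by simp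
    have dxs: "d x \<le> s" using lt hy' by simp
    show ?thesis
    proof (cases "d y \<le> s")
      case True
      have "\<bar>C (Suc s) x y\<bar> \<le> (1-b)*(1-b)*\<bar>C s x y\<bar> + (1-b)*b*\<bar>C s x (p y)\<bar> + b*(1-b)*\<bar>C s (p x) y\<bar> + b*b*\<bar>C s (p x) (p y)\<bar>"
        unfolding C_Suc_copy[OF xy hx hy dxs True] using lt True b0'
        by (intro abs4) auto
      also have "\<dots> \<le> (1-b)*(1-b)*(A*q) + (1-b)*b*A + b*(1-b)*(A*q*q) + b*b*(A*q)"
        using i1 i2 i3 i4 b0' by (intro add_mono mult_left_mono) auto
      also have "\<dots> = A * (((1-b)*(1-b) + b*b) * q + b*(1-b)*(q*q + 1))" by (simp add: algebra_simps)
      also have "\<dots> \<le> A * (\<rho> * q)" using mult_left_mono[OF hc A0] .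
      finally show ?thesis using goal by (simp only:)
    next
      case False
      then have ds: "d y = Suc s" using hy' by simp
      have "\<bar>C (Suc s) x y\<bar> \<le> (1-b)*(1-2*a)*\<bar>C s x (p y)\<bar> + b*(1-2*a)*\<bar>C s (p x) (p y)\<bar>"
        unfolding C_Suc_act[OF xy hx hy dxs ds] using lt ds b0' t0
        by (intro abs2) auto
      also have "\<dots> \<le> (1-b)*(1-2*a)*A + b*(1-2*a)*(A*q)"
        using i2 i4 b0' t0 by (intro add_mono mult_left_mono) auto
      also have "\<dots> = A * ((1-2*a)*((1-b) + b*q))" by (simp add: algebra_simps)
      also have "\<dots> \<le> A * (\<rho> * q)" using mult_left_mono[OF ha A0] .
      finally show ?thesis using goal by (simp only:)
    qed
  qed
qed

abbreviation Bt where "Bt t \<equiv> {v. d v \<le> t}"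

lemma Bt_nonempty: "card (Bt t) > 0"
proof -
  have "r \<in> Bt t" by simp
  then have "Bt t \<noteq> {}" by blast
  then show ?thesis using finite_ball[of t] by (simp add: card_gt_0_iff)
qed

lemma bias_eq:
  assumes f: "f \<in> set_pmf (D t)"
  shows "opinion_bias f = (\<Sum>v\<in>Bt t. val (f v)) / real (card (Bt t))"
proof -
  have nb: "{v. f v \<noteq> Bot} = Bt t"
    unfolding set_eq_iff mem_Collect_eq using supp_Bot[OF f] supp_nBot[OF f] by (meson not_le)
  have vv: "\<And>v. val (f v) = (if f v = Pos then 1 else 0) - (if f v = Neg then 1 else 0)"
    by (rule val_split)
  have sub: "\<And>v. f v \<noteq> Bot \<Longrightarrow> d v \<le> t" using nb by blast
  have P: "{v. f v = Pos} = Bt t \<inter> {v. f v = Pos}" and N: "{v. f v = Neg} = Bt t \<inter> {v. f v = Neg}"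
    using sub by fastforce+
  have "(\<Sum>v\<in>Bt t. val (f v)) = (\<Sum>v\<in>Bt t. (if f v = Pos then 1 else 0)) - (\<Sum>v\<in>Bt t. (if f v = Neg then 1 else (0::real)))"
    by (simp only: vv sum_subtractf)
  also have "\<dots> = real (card {v. f v = Pos}) - real (card {v. f v = Neg})"
    using finite_ball[of t] P N by (simp only: sum_if_card)
  finally have eq: "(\<Sum>v\<in>Bt t. val (f v)) = real (card {v. f v = Pos}) - real (card {v. f v = Neg})" .
  show ?thesis unfolding opinion_bias_def nb eq ..
qed

lemma Ebias: "measure_pmf.expectation (D t) opinion_bias = (\<Sum>v\<in>Bt t. m t v) / real (card (Bt t))"
proof -
  have "measure_pmf.expectation (D t) opinion_bias =
        measure_pmf.expectation (D t) (\<lambda>f. (\<Sum>v\<in>Bt t. val (f v)) / real (card (Bt t)))"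
    by (rule exp_cong[OF D_finite]) (rule bias_eq)
  also have "\<dots> = (\<Sum>v\<in>Bt t. m t v) / real (card (Bt t))"
    unfolding m_def
    by (simp only: integral_divide_zero Bochner_Integration.integral_sum[OF integrable_measure_pmf_finite[OF D_finite]])
  finally show ?thesis .
qed

lemma var_eq:
  "measure_pmf.expectation (D t) (\<lambda>f. (opinion_bias f - measure_pmf.expectation (D t) opinion_bias)\<^sup>2) =
   (\<Sum>u\<in>Bt t. \<Sum>v\<in>Bt t. C t u v) / (real (card (Bt t)))\<^sup>2"
proof -
  let ?V = "real (card (Bt t))"
  have "measure_pmf.expectation (D t) (\<lambda>f. (opinion_bias f - measure_pmf.expectation (D t) opinion_bias)\<^sup>2) =
    measure_pmf.expectation (D t) (\<lambda>f. (\<Sum>u\<in>Bt t. \<Sum>v\<in>Bt t. (val (f u) - m t u) * (val (f v) - m t v)) / ?V\<^sup>2)"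
  proof (rule exp_cong[OF D_finite])
    fix f assume f: "f \<in> set_pmf (D t)"
    have "opinion_bias f - measure_pmf.expectation (D t) opinion_bias = (\<Sum>u\<in>Bt t. val (f u) - m t u) / ?V"
      unfolding bias_eq[OF f] Ebias by (simp add: sum_subtractf diff_divide_distrib)
    then show "(opinion_bias f - measure_pmf.expectation (D t) opinion_bias)\<^sup>2 =
      (\<Sum>u\<in>Bt t. \<Sum>v\<in>Bt t. (val (f u) - m t u) * (val (f v) - m t v)) / ?V\<^sup>2"
      by (simp only: power2_eq_square sum_product times_divide_times_eq)
  qed
  also have "\<dots> = (\<Sum>u\<in>Bt t. \<Sum>v\<in>Bt t. C t u v) / ?V\<^sup>2"
    unfolding C_def
    by (simp only: integral_divide_zero Bochner_Integration.integral_sum[OF integrable_measure_pmf_finite[OF D_finite]])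
  finally show ?thesis .
qed

definition dd :: "'v \<Rightarrow> 'v \<Rightarrow> nat" where
  "dd u v = (if d u \<le> d v then d v - d u else d u - d v)"

lemma C_decay_sym:
  assumes q0: "0 < q" and q1: "q \<le> 1" and rho1: "1 \<le> \<rho>"
    and hc: "((1-b)*(1-b) + b*b) * q + b*(1-b)*(q*q + 1) \<le> \<rho> * q"
    and ha: "(1-2*a)*((1-b) + b*q) \<le> \<rho> * q"
  shows "\<bar>C s u v\<bar> \<le> 4 * q^(dd u v) * \<rho>^s"
proof (cases "d u \<le> d v")
  case True
  then show ?thesis using C_decay[OF assms, of s u v] by (simp add: dd_def)
next
  case False
  then show ?thesis using C_decay[OF assms, of s v u] by (simp add: dd_def C_sym)
qed

lemma C_split:
  assumes q0: "0 < q" and q1: "q \<le> 1" and rho1: "1 \<le> \<rho>"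
    and hc: "((1-b)*(1-b) + b*b) * q + b*(1-b)*(q*q + 1) \<le> \<rho> * q"
    and ha: "(1-2*a)*((1-b) + b*q) \<le> \<rho> * q"
  shows "\<bar>C s u v\<bar> \<le> 4 * (q^W * \<rho>^s) + (if v \<noteq> r \<and> u \<noteq> r \<and> dd u v < W then 4 else 0)"
proof -
  have K0: "0 \<le> q^W * \<rho>^s" using q0 rho1 by simp
  show ?thesis
  proof (cases "v \<noteq> r \<and> u \<noteq> r \<and> dd u v < W")
    case True
    then show ?thesis using C_bound[of s u v] K0 by simp
  next
    case False
    show ?thesis
    proof (cases "u = r \<or> v = r")
      case True
      then have "C s u v = 0" using C_root C_sym by metis
      then show ?thesis using K0 by simp
    next
      case F2: False
      then have "W \<le> dd u v" using False by auto
      then have "q^(dd u v) \<le> q^W" using q0 q1 by (simp add: power_decreasing)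
      then have "4 * q^(dd u v) * \<rho>^s \<le> 4 * (q^W * \<rho>^s)" using rho1 by simp
      then show ?thesis using C_decay_sym[OF assms, of s u v] False by simp
    qed
  qed
qed

lemma window_count:
  assumes u: "d u \<le> t" and W1: "1 \<le> W"
    and hwin: "\<And>s s'. s \<le> s' \<Longrightarrow> s' \<le> t \<Longrightarrow> s' - s \<le> W \<Longrightarrow>
                 real (card {v. s < d v \<and> d v \<le> s'}) \<le> M * real (card (Bt t))"
  shows "real (card (Bt t \<inter> {v. v \<noteq> r \<and> u \<noteq> r \<and> dd u v < W})) \<le> 2 * M * real (card (Bt t))"
proof -
  define s0 where "s0 = d u - W"
  define s2 where "s2 = min t (d u + W - 1)"
  have sub: "Bt t \<inter> {v. v \<noteq> r \<and> u \<noteq> r \<and> dd u v < W} \<subseteq>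
      {v. s0 < d v \<and> d v \<le> d u} \<union> {v. d u < d v \<and> d v \<le> s2}"
  proof
    fix v assume v: "v \<in> Bt t \<inter> {v. v \<noteq> r \<and> u \<noteq> r \<and> dd u v < W}"
    then have vr: "v \<noteq> r" and dv: "d v \<le> t" and ddw: "dd u v < W" by auto
    have "0 < d v" using d_pos[OF vr] .
    show "v \<in> {v. s0 < d v \<and> d v \<le> d u} \<union> {v. d u < d v \<and> d v \<le> s2}"
    proof (cases "d v \<le> d u")
      case True
      then have "d u - d v < W" using ddw by (auto simp: dd_def split: if_splits)
      then have "s0 < d v" unfolding s0_def using \<open>0 < d v\<close> by linarith
      then show ?thesis using True by simp
    next
      case False
      then have "d v - d u < W" using ddw by (auto simp: dd_def split: if_splits)
      then have "d v \<le> s2" unfolding s2_def using dv by linarith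
      then show ?thesis using False by simp
    qed
  qed
  have fin: "finite {v. s0 < d v \<and> d v \<le> d u}" "finite {v. d u < d v \<and> d v \<le> s2}"
    by (rule finite_subset[OF _ finite_ball[of "d u"]], auto)
       (rule finite_subset[OF _ finite_ball[of s2]], auto)
  have "card (Bt t \<inter> {v. v \<noteq> r \<and> u \<noteq> r \<and> dd u v < W}) \<le>
        card ({v. s0 < d v \<and> d v \<le> d u} \<union> {v. d u < d v \<and> d v \<le> s2})"
    using fin by (intro card_mono[OF _ sub]) auto
  also have "\<dots> \<le> card {v. s0 < d v \<and> d v \<le> d u} + card {v. d u < d v \<and> d v \<le> s2}"
    by (rule card_Un_le)
  finally have "real (card (Bt t \<inter> {v. v \<noteq> r \<and> u \<noteq> r \<and> dd u v < W})) \<le>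
        real (card {v. s0 < d v \<and> d v \<le> d u}) + real (card {v. d u < d v \<and> d v \<le> s2})"
    by linarith
  also have "\<dots> \<le> M * real (card (Bt t)) + M * real (card (Bt t))"
    using u W1 by (intro add_mono hwin) (auto simp: s0_def s2_def)
  finally show ?thesis by simp
qed

lemma var_bound:
  assumes q0: "0 < q" and q1: "q \<le> 1" and rho1: "1 \<le> \<rho>"
    and hc: "((1-b)*(1-b) + b*b) * q + b*(1-b)*(q*q + 1) \<le> \<rho> * q"
    and ha: "(1-2*a)*((1-b) + b*q) \<le> \<rho> * q"
    and W1: "1 \<le> W"
    and hwin: "\<And>s s'. s \<le> s' \<Longrightarrow> s' \<le> t \<Longrightarrow> s' - s \<le> W \<Longrightarrow>
                 real (card {v. s < d v \<and> d v \<le> s'}) \<le> M * real (card (Bt t))"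
  shows "measure_pmf.expectation (D t) (\<lambda>f. (opinion_bias f - measure_pmf.expectation (D t) opinion_bias)\<^sup>2)
          \<le> 4 * (q^W * \<rho>^t) + 8 * M"
proof -
  let ?V = "real (card (Bt t))"
  let ?K = "q^W * \<rho>^t"
  have V0: "0 < ?V" using Bt_nonempty by simp
  have fin: "finite (Bt t)" by (rule finite_ball)
  have row: "(\<Sum>v\<in>Bt t. \<bar>C t u v\<bar>) \<le> 4 * ?K * ?V + 8 * M * ?V" if u: "u \<in> Bt t" for u
  proof -
    have "(\<Sum>v\<in>Bt t. \<bar>C t u v\<bar>) \<le> (\<Sum>v\<in>Bt t. 4 * ?K + (if v \<noteq> r \<and> u \<noteq> r \<and> dd u v < W then 4 else 0))"
      by (intro sum_mono C_split[OF q0 q1 rho1 hc ha])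
    also have "\<dots> = 4 * ?K * ?V + 4 * real (card (Bt t \<inter> {v. v \<noteq> r \<and> u \<noteq> r \<and> dd u v < W}))"
      using fin by (simp add: sum.distrib sum_if_card4)
    also have "\<dots> \<le> 4 * ?K * ?V + 4 * (2 * M * ?V)"
      using window_count[of u t W M] u W1 hwin by simp
    finally show ?thesis by simp
  qed
  have "(\<Sum>u\<in>Bt t. \<Sum>v\<in>Bt t. C t u v) \<le> (\<Sum>u\<in>Bt t. \<Sum>v\<in>Bt t. \<bar>C t u v\<bar>)"
    by (intro sum_mono) auto
  also have "\<dots> \<le> (\<Sum>u\<in>Bt t. 4 * ?K * ?V + 8 * M * ?V)"
    by (intro sum_mono row) simp
  also have "\<dots> = (4 * ?K + 8 * M) * ?V\<^sup>2"
    by (simp add: power2_eq_square algebra_simps)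
  finally have S: "(\<Sum>u\<in>Bt t. \<Sum>v\<in>Bt t. C t u v) \<le> (4 * ?K + 8 * M) * ?V\<^sup>2" .
  have "(\<Sum>u\<in>Bt t. \<Sum>v\<in>Bt t. C t u v) / ?V\<^sup>2 \<le> 4 * ?K + 8 * M"
    using S V0 by (simp add: divide_le_eq)
  then show ?thesis unfolding var_eq .
qed

lemma cheb:
  assumes "0 < \<eta>"
  shows "measure_pmf.prob (D t) {f. \<bar>opinion_bias f - measure_pmf.expectation (D t) opinion_bias\<bar> > \<eta>}
    \<le> measure_pmf.expectation (D t) (\<lambda>f. (opinion_bias f - measure_pmf.expectation (D t) opinion_bias)\<^sup>2) / \<eta>\<^sup>2"
proof -
  have "measure_pmf.prob (D t) {f. \<bar>opinion_bias f - measure_pmf.expectation (D t) opinion_bias\<bar> > \<eta>}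
     \<le> measure_pmf.prob (D t) {f \<in> space (measure_pmf (D t)). \<eta> \<le> \<bar>opinion_bias f - measure_pmf.expectation (D t) opinion_bias\<bar>}"
    by (intro measure_pmf.finite_measure_mono) auto
  also have "\<dots> \<le> measure_pmf.expectation (D t) (\<lambda>f. (opinion_bias f - measure_pmf.expectation (D t) opinion_bias)\<^sup>2) / \<eta>\<^sup>2"
    by (rule measure_pmf.Chebyshev_inequality) (auto simp: assms integrable_measure_pmf_finite[OF D_finite])
  finally show ?thesis .
qed

lemma K_bound:
  fixes t :: nat and c' \<delta> :: real and W :: nat
  assumes t1: "1 \<le> t" and c'0: "0 < c'" and c'q: "c' \<le> 1/4"
    and \<delta>: "\<delta> = real t powr (c' - 1/2)" and W: "W = nat \<lfloor>real t powr (1/2 + c')\<rfloor>"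
    and \<delta>2: "\<delta> \<le> 1/2"
  shows "(1 - \<delta>)^W * (1 + \<delta>^2/2)^t \<le> exp (1 - real t powr (2*c') / 2)"
proof -
  have tpos: "0 < real t" using t1 by simp
  have d0: "0 \<le> \<delta>" unfolding \<delta> by simp
  have "(1 - \<delta>)^W \<le> exp (-\<delta>)^W"
    using exp_ge_add_one_self[of "-\<delta>"] \<delta>2 by (intro power_mono) auto
  also have "\<dots> = exp (- (\<delta> * real W))" by (simp add: exp_of_nat_mult[symmetric] mult.commute)
  finally have A: "(1 - \<delta>)^W \<le> exp (- (\<delta> * real W))" .
  have "(1 + \<delta>^2/2)^t \<le> exp (\<delta>^2/2)^t"
    using exp_ge_add_one_self[of "\<delta>^2/2"] by (intro power_mono) auto
  also have "\<dots> = exp (real t * \<delta>^2 / 2)" by (simp add: exp_of_nat_mult[symmetric])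
  finally have B: "(1 + \<delta>^2/2)^t \<le> exp (real t * \<delta>^2 / 2)" .
  have p1: "real t * \<delta>^2 = real t powr (2*c')"
  proof -
    have "\<delta>^2 = real t powr (2*c' - 1)" unfolding \<delta> using tpos
      by (simp add: power2_eq_square powr_add[symmetric])
    moreover have "real t = real t powr 1" using tpos by simp
    ultimately have "real t * \<delta>^2 = real t powr 1 * real t powr (2*c' - 1)" by (simp only:)
    also have "\<dots> = real t powr (1 + (2*c' - 1))" by (rule powr_add[symmetric])
    finally show ?thesis by simp
  qed
  have p2: "\<delta> * real t powr (1/2 + c') = real t powr (2*c')"
    unfolding \<delta> by (simp add: powr_add[symmetric])
  have "real W \<ge> real t powr (1/2 + c') - 1"
  proof -
    have "real t powr (1/2 + c') \<ge> 0" by simp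
    then have "real W = real_of_int \<lfloor>real t powr (1/2 + c')\<rfloor>" unfolding W by simp
    then show ?thesis using real_of_int_floor_gt_diff_one[of "real t powr (1/2 + c')"] by linarith
  qed
  then have "\<delta> * real W \<ge> \<delta> * (real t powr (1/2 + c') - 1)" using d0 by (rule mult_left_mono)
  then have C1: "\<delta> * real W \<ge> real t powr (2*c') - 1" using p2 \<delta>2 by (simp add: right_diff_distrib)
  have "(1 - \<delta>)^W * (1 + \<delta>^2/2)^t \<le> exp (- (\<delta> * real W)) * exp (real t * \<delta>^2 / 2)"
    using A B d0 \<delta>2 by (intro mult_mono) auto
  also have "\<dots> = exp (- (\<delta> * real W) + real t powr (2*c') / 2)"
    by (simp add: exp_add[symmetric] p1)
  also have "\<dots> \<le> exp (1 - real t powr (2*c') / 2)"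
    using C1 by simp
  finally show ?thesis .
qed

lemma final_bound:
  fixes t :: nat and c' M :: real
  assumes t1: "1 \<le> t" and c'0: "0 < c'" and c'q: "c' \<le> 1/4"
    and \<delta>2: "real t powr (c' - 1/2) \<le> 1/2"
    and hq: "(1-2*a)*(1-b)/(1-(1-2*a)*b) \<le> 1 - real t powr (c' - 1/2)"
    and hwin: "\<And>s s'. s \<le> s' \<Longrightarrow> s' \<le> t \<Longrightarrow> real (s' - s) \<le> real t powr (1/2 + c') \<Longrightarrow>
                 real (card {v. s < d v \<and> d v \<le> s'}) \<le> M * real (card (Bt t))"
  shows "measure_pmf.expectation (D t) (\<lambda>f. (opinion_bias f - measure_pmf.expectation (D t) opinion_bias)\<^sup>2)
          \<le> 4 * exp (1 - real t powr (2*c') / 2) + 8 * M"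
proof -
  define \<delta> where "\<delta> = real t powr (c' - 1/2)"
  define W where "W = nat \<lfloor>real t powr (1/2 + c')\<rfloor>"
  define q where "q = 1 - \<delta>"
  define \<rho> where "\<rho> = 1 + \<delta>^2/2"
  define \<theta> where "\<theta> = 1 - 2*a"
  have d0: "0 \<le> \<delta>" unfolding \<delta>_def by simp
  have d2: "\<delta> \<le> 1/2" using \<delta>2 unfolding \<delta>_def .
  have q0: "0 < q" and q1: "q \<le> 1" and qh: "1/2 \<le> q" using d0 d2 unfolding q_def by auto
  have rho1: "1 \<le> \<rho>" unfolding \<rho>_def by simp
  have th0: "0 < \<theta>" "\<theta> < 1" unfolding \<theta>_def using a0 a1 by auto
  have b': "0 < b" "b < 1" using b0 b1 by auto
  have hc: "((1-b)*(1-b) + b*b) * q + b*(1-b)*(q*q + 1) \<le> \<rho> * q"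
  proof -
    have e1: "((1-b)*(1-b) + b*b) * q + b*(1-b)*(q*q + 1) = q + b*(1-b)*\<delta>^2"
      unfolding q_def by (simp add: algebra_simps power2_eq_square)
    have e2: "\<rho> * q = q + \<delta>^2/2 * q" unfolding \<rho>_def by (simp add: algebra_simps)
    have "0 \<le> (b - 1/2)^2" by simp
    then have "0 \<le> b*b - b + 1/4" by (simp add: power2_eq_square algebra_simps)
    then have "b*(1-b) \<le> 1/4" by (simp add: algebra_simps)
    then have "b*(1-b)*\<delta>^2 \<le> 1/4 * \<delta>^2" by (intro mult_right_mono) auto
    also have "\<dots> \<le> \<delta>^2/2 * q" using mult_left_mono[OF qh, of "\<delta>^2/2"] by simp
    finally show ?thesis using e1 e2 by simp
  qed
  have ha: "(1-2*a)*((1-b) + b*q) \<le> \<rho> * q"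
  proof -
    have "\<theta>*b < 1*b" using mult_strict_right_mono[OF th0(2) b'(1)] .
    then have den: "0 < 1 - \<theta>*b" using b' by linarith
    have "\<theta>*(1-b)/(1-\<theta>*b) \<le> q" using hq unfolding q_def \<delta>_def \<theta>_def .
    then have "\<theta>*(1-b) \<le> q * (1-\<theta>*b)" using den by (simp add: divide_le_eq)
    then have "\<theta>*((1-b) + b*q) \<le> q" by (simp add: algebra_simps)
    also have "\<dots> \<le> \<rho> * q" using rho1 q0 by simp
    finally show ?thesis unfolding \<theta>_def .
  qed
  have Wge: "1 \<le> real t powr (1/2 + c')" using t1 c'0 by (simp add: ge_one_powr_ge_zero)
  then have W1: "1 \<le> W" unfolding W_def by (simp add: le_nat_iff)
  have hwin': "real (card {v. s < d v \<and> d v \<le> s'}) \<le> M * real (card (Bt t))"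
    if "s \<le> s'" "s' \<le> t" "s' - s \<le> W" for s s'
  proof (rule hwin[OF that(1,2)])
    have "real (s' - s) \<le> real W" using that(3) by simp
    also have "\<dots> \<le> real t powr (1/2 + c')" unfolding W_def
      using Wge by (simp add: of_nat_nat)
    finally show "real (s' - s) \<le> real t powr (1/2 + c')" .
  qed
  have "measure_pmf.expectation (D t) (\<lambda>f. (opinion_bias f - measure_pmf.expectation (D t) opinion_bias)\<^sup>2)
          \<le> 4 * (q^W * \<rho>^t) + 8 * M"
    by (rule var_bound[OF q0 q1 rho1 hc ha W1 hwin'])
  also have "q^W * \<rho>^t \<le> exp (1 - real t powr (2*c') / 2)"
    unfolding q_def \<rho>_def by (rule K_bound[OF t1 c'0 c'q \<delta>_def W_def d2])
  finally show ?thesis by simp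
qed

end

theorem mainTheorem16:
  fixes E :: "'v \<Rightarrow> 'v \<Rightarrow> bool" and r :: 'v and p :: "'v \<Rightarrow> 'v"
    and a b c :: real
  assumes "undirected E" and "connected_graph E" and "locally_finite E"
    and "bfs_parent E r p"
    and "0 < a" and "a < 1/2" and "0 < b" and "b < 1" and "0 < c"
    and "(\<lambda>t::nat. Max {(real (volume E r s') - real (volume E r s)) / real (volume E r t) | s s'.
             s < s' \<and> s' \<le> t \<and> real (s' - s) \<le> real t powr (0.5 + c)}) \<longlonglongrightarrow> 0"
  shows "\<forall>\<eta>>0. \<exists>t0. \<forall>t\<ge>t0.
           measure_pmf.prob (spread_dist a b r p t)
             {f. \<bar>opinion_bias f - measure_pmf.expectation (spread_dist a b r p t) opinion_bias\<bar> > \<eta>}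
           < \<eta>"
proof -
  interpret spr E r p a b using assms(3-8) by unfold_locales auto
  define c' where "c' = min c (1/4)"
  have c'0: "0 < c'" and c'c: "c' \<le> c" and c'q: "c' \<le> 1/4" using assms(9) by (auto simp: c'_def)
  define Mx where "Mx t = Max {(real (volume E r s') - real (volume E r s)) / real (volume E r t) | s s'.
             s < s' \<and> s' \<le> t \<and> real (s' - s) \<le> real t powr (0.5 + c)}" for t :: nat
  have lim: "Mx \<longlonglongrightarrow> 0" using assms(10) unfolding Mx_def .
  define \<theta> where "\<theta> = 1 - 2*a"
  define \<delta>0 where "\<delta>0 = min (1/2) (1 - \<theta>*(1-b)/(1-\<theta>*b))"
  have th0: "0 < \<theta>" "\<theta> < 1" unfolding \<theta>_def using assms(5,6) by auto
  have "\<theta>*b < 1*b" using mult_strict_right_mono[OF th0(2) assms(7)] .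
  then have den: "0 < 1 - \<theta>*b" using assms(8) by linarith
  have "\<theta>*(1-b) < 1 - \<theta>*b" using th0 by (simp add: algebra_simps)
  then have "\<theta>*(1-b)/(1-\<theta>*b) < 1" using den by simp
  then have d0pos: "0 < \<delta>0" unfolding \<delta>0_def by simp
  have vol: "\<And>n. volume E r n = card (Bt n)" unfolding volume_def by simp
  have hwin: "real (card {v. s < d v \<and> d v \<le> s'}) \<le> Mx t * real (card (Bt t))"
    if t1: "1 \<le> t" and ss: "s \<le> s'" "s' \<le> t" and w: "real (s' - s) \<le> real t powr (1/2 + c')" for t s s'
  proof -
    let ?F = "{(real (volume E r s') - real (volume E r s)) / real (volume E r t) | s s'.
             s < s' \<and> s' \<le> t \<and> real (s' - s) \<le> real t powr (0.5 + c)}"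
    have Fimg: "?F \<subseteq> (\<lambda>(s, s'). (real (volume E r s') - real (volume E r s)) / real (volume E r t)) ` ({..t} \<times> {..t})"
      by auto
    have finF: "finite ?F" by (rule finite_subset[OF Fimg]) auto
    have V0: "0 < real (card (Bt t))" using Bt_nonempty by simp
    have pw: "real t powr (1/2 + c') \<le> real t powr (0.5 + c)"
      using t1 c'c by (intro powr_mono) auto
    have mono: "card (Bt x) \<le> card (Bt y)" if "x \<le> y" for x y
      using that by (intro card_mono finite_ball) auto
    have Mx0: "0 \<le> Mx t"
    proof -
      have "(real (volume E r 1) - real (volume E r 0)) / real (volume E r t) \<in> ?F"
        using t1 ge_one_powr_ge_zero[of "real t" "0.5 + c"] assms(9) by force
      then have "(real (volume E r 1) - real (volume E r 0)) / real (volume E r t) \<le> Mx t"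
        unfolding Mx_def using finF by (rule Max_ge[rotated])
      moreover have "0 \<le> (real (volume E r 1) - real (volume E r 0)) / real (volume E r t)"
        using mono[of 0 1] by (simp add: vol)
      ultimately show ?thesis by linarith
    qed
    have cardeq: "card {v. s < d v \<and> d v \<le> s'} = card (Bt s') - card (Bt s)"
    proof -
      have "{v. s < d v \<and> d v \<le> s'} = Bt s' - Bt s" by auto
      moreover have "Bt s \<subseteq> Bt s'" using ss by auto
      ultimately show ?thesis using finite_ball[of s] by (simp add: card_Diff_subset)
    qed
    show ?thesis
    proof (cases "s < s'")
      case True
      have w': "real (s' - s) \<le> real t powr (0.5 + c)" using w pw by simp
      have "(real (volume E r s') - real (volume E r s)) / real (volume E r t) \<in> ?F"
        using True ss w' by blast
      then have "(real (volume E r s') - real (volume E r s)) / real (volume E r t) \<le> Mx t"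
        unfolding Mx_def using finF by (rule Max_ge[rotated])
      then have "(real (card (Bt s')) - real (card (Bt s))) \<le> Mx t * real (card (Bt t))"
        using V0 by (simp add: vol divide_le_eq)
      moreover have "real (card {v. s < d v \<and> d v \<le> s'}) = real (card (Bt s')) - real (card (Bt s))"
        unfolding cardeq using mono[OF ss(1)] by (simp add: of_nat_diff)
      ultimately show ?thesis by simp
    next
      case False
      then have e: "{v. s < d v \<and> d v \<le> s'} = {}" using ss by auto
      have "0 \<le> Mx t * real (card (Bt t))" using Mx0 V0 by simp
      then show ?thesis unfolding e by simp
    qed
  qed
  show ?thesis
  proof (intro allI impI)
    fix \<eta> :: real assume \<eta>: "0 < \<eta>"
    have ev1: "eventually (\<lambda>t. real t powr (c' - 1/2) < \<delta>0) sequentially"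
      using tendsto_neg_powr[OF _ filterlim_real_sequentially, of "c' - 1/2"] c'q d0pos
      by (intro order_tendstoD(2)) auto
    define L where "L = \<bar>2 * (1 - ln (\<eta>^3/8))\<bar> + 1"
    have L0: "0 < L" unfolding L_def by simp
    have ev2: "eventually (\<lambda>t. real t powr (- (2*c')) < 1 / L) sequentially"
      using tendsto_neg_powr[OF _ filterlim_real_sequentially, of "- (2*c')"] c'0 L0
      by (intro order_tendstoD(2)) auto
    have ev3: "eventually (\<lambda>t. Mx t < \<eta>^3/16) sequentially"
      using \<eta> by (intro order_tendstoD(2)[OF lim]) auto
    have ev4: "eventually (\<lambda>t. 1 \<le> t) sequentially" by (rule eventually_ge_at_top)
    obtain t0 where t0: "\<And>t. t \<ge> t0 \<Longrightarrow> real t powr (c' - 1/2) < \<delta>0 \<and> real t powr (- (2*c')) < 1 / L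
        \<and> Mx t < \<eta>^3/16 \<and> 1 \<le> t"
      using eventually_conj[OF ev1 eventually_conj[OF ev2 eventually_conj[OF ev3 ev4]]]
      unfolding eventually_sequentially by blast
    show "\<exists>t0. \<forall>t\<ge>t0. measure_pmf.prob (spread_dist a b r p t)
             {f. \<bar>opinion_bias f - measure_pmf.expectation (spread_dist a b r p t) opinion_bias\<bar> > \<eta>} < \<eta>"
    proof (intro exI allI impI)
      fix t assume "t0 \<le> t"
      note h = t0[OF this]
      have t1: "1 \<le> t" using h by simp
      have tpos: "0 < real t" using t1 by simp
      have d2: "real t powr (c' - 1/2) \<le> 1/2" using h unfolding \<delta>0_def by simp
      have hq: "(1-2*a)*(1-b)/(1-(1-2*a)*b) \<le> 1 - real t powr (c' - 1/2)"
        using h unfolding \<delta>0_def \<theta>_def by simp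
      have fb: "measure_pmf.expectation (D t) (\<lambda>f. (opinion_bias f - measure_pmf.expectation (D t) opinion_bias)\<^sup>2)
          \<le> 4 * exp (1 - real t powr (2*c') / 2) + 8 * Mx t"
        by (rule final_bound[OF t1 c'0 c'q d2 hq hwin[OF t1]])
      have "real t powr (2*c') = 1 / real t powr (- (2*c'))" using tpos by (simp add: powr_minus divide_inverse)
      moreover have "0 < real t powr (- (2*c'))" using tpos by simp
      moreover have "real t powr (- (2*c')) < 1 / L" using h by simp
      ultimately have "L < real t powr (2*c')" using L0
        by (metis divide_less_eq_1_pos less_divide_eq_1_pos mult.commute pos_less_divide_eq)
      moreover have "2 * (1 - ln (\<eta>^3/8)) < L" unfolding L_def
        using abs_ge_self[of "2 * (1 - ln (\<eta>^3/8))"] by linarith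
      ultimately have "1 - real t powr (2*c') / 2 < ln (\<eta>^3/8)" by (simp add: field_simps)
      then have "exp (1 - real t powr (2*c') / 2) < \<eta>^3/8" using \<eta> by (metis exp_less_cancel_iff exp_ln zero_less_divide_iff zero_less_numeral zero_less_power)
      then have "measure_pmf.expectation (D t) (\<lambda>f. (opinion_bias f - measure_pmf.expectation (D t) opinion_bias)\<^sup>2) < \<eta>^3"
        using fb h by linarith
      then have "measure_pmf.expectation (D t) (\<lambda>f. (opinion_bias f - measure_pmf.expectation (D t) opinion_bias)\<^sup>2) / \<eta>\<^sup>2 < \<eta>^3 / \<eta>\<^sup>2"
        using \<eta> by (simp add: divide_strict_right_mono)
      also have "\<eta>^3 / \<eta>\<^sup>2 = \<eta>" using \<eta> by (simp add: power2_eq_square power3_eq_cube)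
      finally show "measure_pmf.prob (spread_dist a b r p t)
             {f. \<bar>opinion_bias f - measure_pmf.expectation (spread_dist a b r p t) opinion_bias\<bar> > \<eta>} < \<eta>"
        using cheb[OF \<eta>, of t] by linarith
    qed
  qed
qed

end
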